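(* Let $r\ge1$, $\mathbf{m}\in\mathbb{N}^r$, $m=m_1+\cdots+m_r$, $\mathbf{f}\in\mathbb{C}^r$ and $a,b,c\in\mathbb{C}$ with $(c-a-m)_{m}\ne0$, $(c-b-m)_{m}\ne0$, $(1+a+b-c)_m\ne0$. Put $C_{k,r}=\frac{(-1)^k}{k!}{}_{r+1}F_{r}\!\left(\begin{matrix}-k,\mathbf{f}+\mathbf{m}\\\mathbf{f}\end{matrix}\right)$ and $$ \hat{Q}_m(t)=\sum_{k=0}^{m}\frac{(-1)^kC_{k,r}(a)_k(b)_k(t)_k}{(c-a-m)_k(c-b-m)_k}\, {}_{3}F_{2}\!\left(\begin{matrix}-m+k,\,t+k,\,c-a-b-m\\ c-a-m+k,\,c-b-m+k\end{matrix}\right), $$ $$ \hat{P}_m(t)=\sum_{k=0}^m\frac{(-1)^k(a)_k(-b-m)_k(t)_k(c-a-m-t)_{m-k}}{(c-a-m)_m(c-b-m)_k\,k!}\, {}_{r+2}F_{r+1}\!\left(\begin{matrix}-k,b,\mathbf{f}+\mathbf{m}\\ b+m-k+1,\mathbf{f}\end{matrix}\right). $$ Then $\hat{Q}_m(t)=\hat{P}_m(t)$ identically in $t$.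
   Context: $(a)_k=\Gamma(a+k)/\Gamma(a)$. $\mathbf{f}+\mathbf{m}$ is componentwise; a vector among hypergeometric parameters means its components are listed. ${}_pF_q(\mathbf{a};\mathbf{b})$ denotes the terminating generalized hypergeometric series at argument $1$. *)

theory Defs
  imports Complex_Main
begin

text \<open>In the statement N is always the termination index n of a numerator
  parameter -n, so all further terms vanish and this is the usual
  terminating series pFq(as; bs).\<close>
definition hyp_term :: "complex list \<Rightarrow> complex list \<Rightarrow> nat \<Rightarrow> complex" where
  "hyp_term as bs N =
     (\<Sum>j\<le>N. prod_list (map (\<lambda>x. pochhammer x j) as)
              / prod_list (map (\<lambda>x. pochhammer x j) bs) / fact j)"

definition Ccoef :: "nat \<Rightarrow> (nat \<Rightarrow> complex) \<Rightarrow> (nat \<Rightarrow> nat) \<Rightarrow> nat \<Rightarrow> complex" where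
  "Ccoef r f mm k =
     (-1) ^ k / fact k *
     hyp_term ((- of_nat k) # map (\<lambda>i. f i + of_nat (mm i)) [0..<r])
              (map f [0..<r]) k"

definition Qhat :: "nat \<Rightarrow> (nat \<Rightarrow> complex) \<Rightarrow> (nat \<Rightarrow> nat) \<Rightarrow> complex \<Rightarrow> complex \<Rightarrow> complex \<Rightarrow> complex \<Rightarrow> complex" where
  "Qhat r f mm a b c t =
    (let m = (\<Sum>i<r. mm i) in
     \<Sum>k\<le>m. (-1) ^ k * Ccoef r f mm k * pochhammer a k * pochhammer b k * pochhammer t k
            / (pochhammer (c - a - of_nat m) k * pochhammer (c - b - of_nat m) k)
            * hyp_term [- of_nat m + of_nat k, t + of_nat k, c - a - b - of_nat m]
                       [c - a - of_nat m + of_nat k, c - b - of_nat m + of_nat k] (m - k))"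

definition Phat :: "nat \<Rightarrow> (nat \<Rightarrow> complex) \<Rightarrow> (nat \<Rightarrow> nat) \<Rightarrow> complex \<Rightarrow> complex \<Rightarrow> complex \<Rightarrow> complex \<Rightarrow> complex" where
  "Phat r f mm a b c t =
    (let m = (\<Sum>i<r. mm i) in
     \<Sum>k\<le>m. (-1) ^ k * pochhammer a k * pochhammer (- b - of_nat m) k * pochhammer t k
            * pochhammer (c - a - of_nat m - t) (m - k)
            / (pochhammer (c - a - of_nat m) m * pochhammer (c - b - of_nat m) k * fact k)
            * hyp_term ((- of_nat k) # b # map (\<lambda>i. f i + of_nat (mm i)) [0..<r])
                       ((b + of_nat m - of_nat k + 1) # map f [0..<r]) k)"

end

theory Submission imports Defs "HOL-Computational_Algebra.Formal_Power_Series" begin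

lemma poch_neg_binom:
  "pochhammer (- of_nat n :: 'a::field_char_0) i = (-1)^i * fact i * of_nat (n choose i)"
proof -
  have "of_nat (n choose i) = ((of_nat n :: 'a) gchoose i)" by (simp add: binomial_gbinomial)
  also have "\<dots> = (-1)^i * pochhammer (- of_nat n) i / fact i" by (simp add: gbinomial_pochhammer)
  finally have "(-1)^i * of_nat (n choose i) = (-1)^i * ((-1)^i * pochhammer (- of_nat n) i / (fact i :: 'a))" by simp
  also have "\<dots> = pochhammer (- of_nat n) i / fact i"
    by (simp add: power_mult_distrib[symmetric] power_mult[symmetric] mult.assoc[symmetric])
  finally show ?thesis by (simp add: field_simps)
qed

lemma poch_neg_fact:
  "pochhammer (- of_nat (i + s) :: 'a::field_char_0) i / fact (i + s) = (-1)^i / fact s"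
proof -
  have "fact (i+s) = (fact i * fact s * of_nat ((i+s) choose i) :: 'a)"
    using binomial_fact_lemma[of i "i+s"] by (metis add_diff_cancel_left' le_add1 of_nat_fact of_nat_mult)
  then show ?thesis unfolding poch_neg_binom[of "i+s" i] by (simp add: field_simps)
qed

lemma vdm:
  fixes a c :: "'a::field_char_0"
  assumes "pochhammer c n \<noteq> 0"
  shows "(\<Sum>k\<le>n. pochhammer a k * pochhammer (- of_nat n) k / (fact k * pochhammer c k))
     = pochhammer (c - a) n / pochhammer c n"
proof -
  have "\<forall>i\<in>{0..<n}. c \<noteq> - of_nat i" using assms by (auto simp: pochhammer_eq_0_iff)
  from Vandermonde_pochhammer[OF this, of a] show ?thesis by (simp add: atMost_atLeast0)
qed

lemma poch_split:
  assumes "i \<le> N"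
  shows "pochhammer z N = pochhammer z i * pochhammer (z + of_nat i) (N - i)"
  using pochhammer_product'[of z i "N-i"] assms by simp

lemma sum_shift_from:
  fixes i N :: nat
  assumes "i \<le> N"
  shows "(\<Sum>j\<in>{i..N}. g j) = (\<Sum>s\<le>N-i. g (i + s))"
proof -
  have "{i..N} = (+) i ` {..N-i}"
  proof
    show "{i..N} \<subseteq> (+) i ` {..N-i}"
    proof
      fix x assume "x \<in> {i..N}"
      then have "x = i + (x - i)" "x - i \<in> {..N-i}" by auto
      then show "x \<in> (+) i ` {..N-i}" by blast
    qed
  qed (use assms in auto)
  then show ?thesis by (simp add: sum.reindex)
qed

lemma inner_sum:
  fixes A t :: complex
  assumes nz: "pochhammer A N \<noteq> 0" and iN: "i \<le> N"
  shows "(\<Sum>j\<le>N. pochhammer (- of_nat N) j * pochhammer t j * pochhammer (- of_nat j) i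
            / (pochhammer A j * fact j))
       = (-1)^i * pochhammer (- of_nat N) i * pochhammer t i * pochhammer (A - t) (N - i) / pochhammer A N"
proof -
  let ?g = "\<lambda>j. pochhammer (- of_nat N) j * pochhammer t j * pochhammer (- of_nat j) i
            / (pochhammer A j * fact j :: complex)"
  have "(\<Sum>j\<le>N. ?g j) = (\<Sum>j\<in>{i..N}. ?g j)"
  proof (rule sum.mono_neutral_right)
    show "\<forall>j\<in>{..N} - {i..N}. ?g j = 0" by (auto simp: pochhammer_of_nat_eq_0_lemma)
  qed auto
  also have "\<dots> = (\<Sum>s\<le>N-i. ?g (i + s))" using iN by (rule sum_shift_from)
  also have "\<dots> = (\<Sum>s\<le>N-i. ((-1)^i * pochhammer (- of_nat N) i * pochhammer t i / pochhammer A i) *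
        (pochhammer (t + of_nat i) s * pochhammer (- of_nat (N - i)) s / (fact s * pochhammer (A + of_nat i) s)))"
  proof (rule sum.cong[OF refl])
    fix s assume s: "s \<in> {..N-i}"
    have nzA: "pochhammer A (i+s) \<noteq> 0" using pochhammer_neq_0_mono[OF nz, of "i+s"] s iN by auto
    have nzA1: "pochhammer A i \<noteq> 0" "pochhammer (A + of_nat i) s \<noteq> 0"
      using nzA unfolding pochhammer_product' by auto
    have e1: "pochhammer (- of_nat N :: complex) (i+s) = pochhammer (- of_nat N) i * pochhammer (- of_nat (N - i)) s"
    proof -
      have "- of_nat N + of_nat i = (- of_nat (N - i) :: complex)" using iN by (simp add: of_nat_diff)
      then show ?thesis unfolding pochhammer_product' by metis
    qed
    have e2: "pochhammer (- of_nat (i+s)) i / fact (i + s) = ((-1)^i / fact s :: complex)"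
      by (rule poch_neg_fact)
    have "?g (i+s) = pochhammer (- of_nat N) (i+s) * pochhammer t (i+s) / pochhammer A (i+s)
          * (pochhammer (- of_nat (i+s)) i / fact (i + s))"
      by (simp add: field_simps)
    also have "\<dots> = pochhammer (- of_nat N) i * pochhammer (- of_nat (N - i)) s *
         (pochhammer t i * pochhammer (t + of_nat i) s) / (pochhammer A i * pochhammer (A + of_nat i) s)
          * ((-1)^i / fact s)"
      unfolding e1 e2 unfolding pochhammer_product' by simp
    also have "\<dots> = ((-1)^i * pochhammer (- of_nat N) i * pochhammer t i / pochhammer A i) *
        (pochhammer (t + of_nat i) s * pochhammer (- of_nat (N - i)) s / (fact s * pochhammer (A + of_nat i) s))"
      using nzA1 by (simp add: field_simps)
    finally show "?g (i+s) = \<dots>" .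
  qed
  also have "\<dots> = ((-1)^i * pochhammer (- of_nat N) i * pochhammer t i / pochhammer A i) *
        (pochhammer (A + of_nat i - (t + of_nat i)) (N - i) / pochhammer (A + of_nat i) (N - i))"
  proof -
    have "pochhammer (A + of_nat i) (N - i) \<noteq> 0" using nz poch_split[OF iN, of A] by auto
    note V = vdm[OF this, of "t + of_nat i"]
    show ?thesis unfolding sum_distrib_left[symmetric] V ..
  qed
  also have "\<dots> = (-1)^i * pochhammer (- of_nat N) i * pochhammer t i * pochhammer (A - t) (N - i) / pochhammer A N"
    using nz unfolding poch_split[OF iN, of A] by (simp add: field_simps)
  finally show ?thesis .
qed

lemma neg1_sq: "(-1::'a::comm_ring_1)^i * (-1)^i = 1"
  by (simp add: power_mult_distrib[symmetric])

lemma sheppard: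
  fixes x t A B :: complex
  assumes nzA: "pochhammer A N \<noteq> 0" and nzB: "pochhammer B N \<noteq> 0"
  shows "(\<Sum>j\<le>N. pochhammer (- of_nat N) j * pochhammer t j * pochhammer (B - x) j
            / (pochhammer A j * pochhammer B j * fact j))
       = (\<Sum>i\<le>N. of_nat (N choose i) * pochhammer x i * pochhammer t i * pochhammer (A - t) (N - i)
            / pochhammer B i) / pochhammer A N"
proof -
  have v: "pochhammer (B - x) j / pochhammer B j
      = (\<Sum>i\<le>N. pochhammer x i * pochhammer (- of_nat j) i / (fact i * pochhammer B i))"
    if jN: "j \<le> N" for j
  proof -
    have "pochhammer B j \<noteq> 0" using pochhammer_neq_0_mono[OF nzB jN] .
    from vdm[OF this, of x] have "pochhammer (B - x) j / pochhammer B j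
      = (\<Sum>i\<le>j. pochhammer x i * pochhammer (- of_nat j) i / (fact i * pochhammer B i))" by simp
    also have "\<dots> = (\<Sum>i\<le>N. pochhammer x i * pochhammer (- of_nat j) i / (fact i * pochhammer B i))"
    proof (rule sum.mono_neutral_left)
      show "\<forall>i\<in>{..N} - {..j}. pochhammer x i * pochhammer (- of_nat j) i / (fact i * pochhammer B i) = (0::complex)"
        by (auto simp: pochhammer_of_nat_eq_0_lemma)
    qed (use jN in auto)
    finally show ?thesis .
  qed
  have "(\<Sum>j\<le>N. pochhammer (- of_nat N) j * pochhammer t j * pochhammer (B - x) j
            / (pochhammer A j * pochhammer B j * fact j))
      = (\<Sum>j\<le>N. (pochhammer (- of_nat N) j * pochhammer t j / (pochhammer A j * fact j))
           * (pochhammer (B - x) j / pochhammer B j))"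
    by (rule sum.cong) (auto simp: field_simps)
  also have "\<dots> = (\<Sum>j\<le>N. \<Sum>i\<le>N. (pochhammer (- of_nat N) j * pochhammer t j / (pochhammer A j * fact j))
           * (pochhammer x i * pochhammer (- of_nat j) i / (fact i * pochhammer B i)))"
    by (rule sum.cong) (auto simp: v sum_distrib_left)
  also have "\<dots> = (\<Sum>i\<le>N. \<Sum>j\<le>N. (pochhammer (- of_nat N) j * pochhammer t j / (pochhammer A j * fact j))
           * (pochhammer x i * pochhammer (- of_nat j) i / (fact i * pochhammer B i)))"
    by (rule sum.swap)
  also have "\<dots> = (\<Sum>i\<le>N. (pochhammer x i / (fact i * pochhammer B i)) *
        (\<Sum>j\<le>N. pochhammer (- of_nat N) j * pochhammer t j * pochhammer (- of_nat j) i
            / (pochhammer A j * fact j)))"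
    by (rule sum.cong) (auto simp: sum_distrib_left field_simps)
  also have "\<dots> = (\<Sum>i\<le>N. (pochhammer x i / (fact i * pochhammer B i)) *
        ((-1)^i * pochhammer (- of_nat N) i * pochhammer t i * pochhammer (A - t) (N - i) / pochhammer A N))"
    by (rule sum.cong) (auto simp: inner_sum[OF nzA])
  also have "\<dots> = (\<Sum>i\<le>N. of_nat (N choose i) * pochhammer x i * pochhammer t i * pochhammer (A - t) (N - i)
            / pochhammer B i / pochhammer A N)"
  proof (rule sum.cong[OF refl])
    fix i
    have e: "(-1)^i * pochhammer (- of_nat N) i = (fact i * of_nat (N choose i) :: complex)"
      unfolding poch_neg_binom by (simp add: mult.assoc[symmetric] neg1_sq)
    show "pochhammer x i / (fact i * pochhammer B i) *
        ((-1)^i * pochhammer (- of_nat N) i * pochhammer t i * pochhammer (A - t) (N - i) / pochhammer A N)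
      = of_nat (N choose i) * pochhammer x i * pochhammer t i * pochhammer (A - t) (N - i)
            / pochhammer B i / pochhammer A N"
      unfolding mult.assoc[of "(-1)^i"] unfolding mult.assoc[symmetric] e
      by (simp add: field_simps)
  qed
  finally show ?thesis by (simp add: sum_divide_distrib)
qed

lemma binom_poch:
  assumes "L \<le> M" "k \<le> L"
  shows "(of_nat ((M - k) choose (L - k)) :: complex)
       = pochhammer (of_nat M - of_nat L + 1) (L - k) / fact (L - k)"
proof -
  have "(of_nat ((M - k) choose (L - k)) :: complex) = (of_nat (M - k) gchoose (L - k))"
    by (simp add: binomial_gbinomial)
  also have "\<dots> = pochhammer (of_nat (M - k) - of_nat (L - k) + 1) (L - k) / fact (L - k)"
    by (rule gbinomial_pochhammer')
  also have "of_nat (M - k) - of_nat (L - k) = (of_nat M - of_nat L :: complex)"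
    using assms by (simp add: of_nat_diff)
  finally show ?thesis .
qed

lemma lemW:
  fixes \<beta> :: complex
  assumes LM: "L \<le> M"
  shows "(\<Sum>s\<le>L. pochhammer \<beta> s / fact s * of_nat ((M - s) choose (L - s)))
       = pochhammer (\<beta> + of_nat M - of_nat L + 1) L / fact L"
proof -
  have t1: "((- \<beta>) gchoose k) = (-1)^k * pochhammer \<beta> k / fact k" for k
    by (simp add: gbinomial_pochhammer)
  have t2: "((of_nat L - of_nat M - 1 :: complex) gchoose (L - k)) = (-1)^(L - k) * of_nat ((M - k) choose (L - k))"
    if "k \<le> L" for k
  proof -
    have "((of_nat L - of_nat M - 1 :: complex) gchoose (L - k))
        = (-1)^(L-k) * pochhammer (- (of_nat L - of_nat M - 1)) (L - k) / fact (L - k)"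
      by (rule gbinomial_pochhammer)
    also have "- (of_nat L - of_nat M - 1) = (of_nat M - of_nat L + 1 :: complex)" by simp
    finally show ?thesis using binom_poch[OF LM that] by simp
  qed
  have "(-1)^L * (\<Sum>s\<le>L. pochhammer \<beta> s / fact s * of_nat ((M - s) choose (L - s)))
      = (\<Sum>s\<le>L. ((- \<beta>) gchoose s) * ((of_nat L - of_nat M - 1 :: complex) gchoose (L - s)))"
    unfolding sum_distrib_left
  proof (rule sum.cong[OF refl])
    fix s assume "s \<in> {..L}"
    then have sL: "s \<le> L" by simp
    have p: "(-1::complex)^L = (-1)^s * (-1)^(L-s)"
      using sL by (simp add: power_add[symmetric])
    show "(-1)^L * (pochhammer \<beta> s / fact s * of_nat ((M - s) choose (L - s)))
        = ((- \<beta>) gchoose s) * ((of_nat L - of_nat M - 1 :: complex) gchoose (L - s))"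
      unfolding t1 t2[OF sL] p by (simp add: field_simps)
  qed
  also have "\<dots> = ((- \<beta>) + (of_nat L - of_nat M - 1)) gchoose L"
    using gbinomial_Vandermonde[of "- \<beta>" "of_nat L - of_nat M - 1" L] by (simp add: atMost_atLeast0)
  also have "\<dots> = (-1)^L * pochhammer (\<beta> + of_nat M - of_nat L + 1) L / fact L"
    by (simp add: gbinomial_pochhammer algebra_simps)
  finally have "(-1)^L * (\<Sum>s\<le>L. pochhammer \<beta> s / fact s * of_nat ((M - s) choose (L - s)))
     = (-1)^L * (pochhammer (\<beta> + of_nat M - of_nat L + 1) L / fact L)"
    by simp
  then show ?thesis by (simp only: mult_cancel_left) simp
qed

lemma coefW:
  fixes b :: complex
  assumes jl: "j \<le> l" and lm: "l \<le> m" and nz: "pochhammer (b + of_nat m - of_nat l + 1) j \<noteq> 0"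
  shows "(\<Sum>k\<in>{j..l}. pochhammer (- of_nat k) j * pochhammer b k * of_nat ((m - k) choose (l - k)) / fact k)
       = (-1)^l * pochhammer (- b - of_nat m) l / fact l * pochhammer (- of_nat l) j * pochhammer b j
           / pochhammer (b + of_nat m - of_nat l + 1) j"
proof -
  have "(\<Sum>k\<in>{j..l}. pochhammer (- of_nat k) j * pochhammer b k * of_nat ((m - k) choose (l - k)) / fact k)
      = (\<Sum>s\<le>l-j. pochhammer (- of_nat (j+s)) j * pochhammer b (j+s) * of_nat ((m - (j+s)) choose (l - (j+s))) / fact (j+s))"
    using jl by (rule sum_shift_from)
  also have "\<dots> = (\<Sum>s\<le>l-j. ((-1)^j * pochhammer b j) *
       (pochhammer (b + of_nat j) s / fact s * of_nat (((m - j) - s) choose ((l - j) - s))))"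
  proof (rule sum.cong[OF refl])
    fix s
    have e2: "pochhammer (- of_nat (j+s)) j / fact (j + s) = ((-1)^j / fact s :: complex)"
      by (rule poch_neg_fact)
    have "pochhammer (- of_nat (j+s)) j * pochhammer b (j+s) * of_nat ((m - (j+s)) choose (l - (j+s))) / fact (j+s)
        = (pochhammer (- of_nat (j+s)) j / fact (j + s)) * pochhammer b (j+s) * of_nat ((m - (j+s)) choose (l - (j+s)))"
      by (simp add: field_simps)
    also have "\<dots> = ((-1)^j / fact s) * (pochhammer b j * pochhammer (b + of_nat j) s) * of_nat (((m - j) - s) choose ((l - j) - s))"
      unfolding e2 pochhammer_product' by (simp add: diff_diff_add)
    finally show "pochhammer (- of_nat (j+s)) j * pochhammer b (j+s) * of_nat ((m - (j+s)) choose (l - (j+s))) / fact (j+s)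
      = ((-1)^j * pochhammer b j) *
       (pochhammer (b + of_nat j) s / fact s * of_nat (((m - j) - s) choose ((l - j) - s)))"
      by (simp add: field_simps)
  qed
  also have "\<dots> = ((-1)^j * pochhammer b j) *
      (pochhammer (b + of_nat j + of_nat (m - j) - of_nat (l - j) + 1) (l - j) / fact (l - j))"
    unfolding sum_distrib_left[symmetric] using lemW[of "l - j" "m - j" "b + of_nat j"] jl lm by simp
  also have "b + of_nat j + of_nat (m - j) - of_nat (l - j) + 1 = b + of_nat m - of_nat l + 1 + of_nat j"
    using jl lm by (simp add: of_nat_diff)
  finally have L: "(\<Sum>k\<in>{j..l}. pochhammer (- of_nat k) j * pochhammer b k * of_nat ((m - k) choose (l - k)) / fact k)
     = ((-1)^j * pochhammer b j) * (pochhammer (b + of_nat m - of_nat l + 1 + of_nat j) (l - j) / fact (l - j))" .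
  have r1: "(-1)^l * pochhammer (- b - of_nat m) l = pochhammer (b + of_nat m - of_nat l + 1) l"
    using pochhammer_minus'[of "b + of_nat m" l] by (simp add: mult.assoc[symmetric] neg1_sq)
  have r2: "pochhammer (b + of_nat m - of_nat l + 1) l
      = pochhammer (b + of_nat m - of_nat l + 1) j * pochhammer (b + of_nat m - of_nat l + 1 + of_nat j) (l - j)"
    by (rule poch_split[OF jl])
  have r3: "pochhammer (- of_nat l) j / fact l = ((-1)^j / fact (l - j) :: complex)"
    using poch_neg_fact[of j "l - j"] jl by simp
  have "(-1)^l * pochhammer (- b - of_nat m) l / fact l * pochhammer (- of_nat l) j * pochhammer b j
           / pochhammer (b + of_nat m - of_nat l + 1) j
      = ((-1)^l * pochhammer (- b - of_nat m) l) * (pochhammer (- of_nat l) j / fact l) * pochhammer b j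
           / pochhammer (b + of_nat m - of_nat l + 1) j"
    by (simp add: field_simps)
  also have "\<dots> = ((-1)^j * pochhammer b j) * (pochhammer (b + of_nat m - of_nat l + 1 + of_nat j) (l - j) / fact (l - j))"
    unfolding r1 r2 r3 using nz by (simp add: field_simps)
  finally show ?thesis using L by simp
qed

lemma perl:
  fixes b :: complex and pp :: "nat \<Rightarrow> complex"
  assumes lm: "l \<le> m" and nz: "\<forall>j\<le>l. pochhammer (b + of_nat m - of_nat l + 1) j \<noteq> 0"
  shows "(\<Sum>k\<le>l. (-1)^k * ((-1)^k / fact k * (\<Sum>j\<le>k. pochhammer (- of_nat k) j * pp j / fact j))
              * pochhammer b k * of_nat ((m - k) choose (l - k)))
       = (-1)^l * pochhammer (- b - of_nat m) l / fact l *
         (\<Sum>j\<le>l. pochhammer (- of_nat l) j * pochhammer b j * pp j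
              / (pochhammer (b + of_nat m - of_nat l + 1) j * fact j))"
proof -
  let ?h = "\<lambda>k j. pochhammer (- of_nat k) j * pochhammer b k * of_nat ((m - k) choose (l - k)) / fact k :: complex"
  have "(\<Sum>k\<le>l. (-1)^k * ((-1)^k / fact k * (\<Sum>j\<le>k. pochhammer (- of_nat k) j * pp j / fact j))
              * pochhammer b k * of_nat ((m - k) choose (l - k)))
      = (\<Sum>k\<le>l. \<Sum>j\<le>l. (pp j / fact j) * ?h k j)"
  proof (rule sum.cong[OF refl])
    fix k assume "k \<in> {..l}"
    then have kl: "k \<le> l" by simp
    have ext: "(\<Sum>j\<le>k. pochhammer (- of_nat k) j * pp j / fact j) = (\<Sum>j\<le>l. pochhammer (- of_nat k) j * pp j / fact j)"
    proof (rule sum.mono_neutral_left)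
      show "\<forall>i\<in>{..l} - {..k}. pochhammer (- of_nat k) i * pp i / fact i = (0::complex)"
        by (auto simp: pochhammer_of_nat_eq_0_lemma)
    qed (use kl in auto)
    have resc: "(-1)^k * ((-1)^k / fact k * S) * pochhammer b k * of_nat ((m - k) choose (l - k))
       = S * (pochhammer b k * of_nat ((m - k) choose (l - k)) / fact k)" for S :: complex
    proof -
      have "(-1)^k * ((-1)^k / fact k * S) * pochhammer b k * of_nat ((m - k) choose (l - k))
         = ((-1)^k * (-1)^k) * (S * (pochhammer b k * of_nat ((m - k) choose (l - k)) / fact k))"
        by (simp add: divide_inverse ac_simps)
      then show ?thesis by (simp only: neg1_sq mult_1)
    qed
    have trm: "(pochhammer (- of_nat k) j * pp j / fact j) * (pochhammer b k * of_nat ((m - k) choose (l - k)) / fact k)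
        = (pp j / fact j) * ?h k j" for j
      by (simp add: divide_inverse ac_simps)
    show "(-1)^k * ((-1)^k / fact k * (\<Sum>j\<le>k. pochhammer (- of_nat k) j * pp j / fact j))
              * pochhammer b k * of_nat ((m - k) choose (l - k)) = (\<Sum>j\<le>l. (pp j / fact j) * ?h k j)"
      unfolding resc ext sum_distrib_right trm ..
  qed
  also have "\<dots> = (\<Sum>j\<le>l. \<Sum>k\<le>l. (pp j / fact j) * ?h k j)" by (rule sum.swap)
  also have "\<dots> = (\<Sum>j\<le>l. (pp j / fact j) * (\<Sum>k\<in>{j..l}. ?h k j))"
  proof (rule sum.cong[OF refl])
    fix j assume "j \<in> {..l}"
    have "(\<Sum>k\<le>l. ?h k j) = (\<Sum>k\<in>{j..l}. ?h k j)"
    proof (rule sum.mono_neutral_right)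
      show "\<forall>i\<in>{..l} - {j..l}. ?h i j = 0"
        by (auto simp: pochhammer_of_nat_eq_0_lemma)
    qed auto
    then show "(\<Sum>k\<le>l. (pp j / fact j) * ?h k j) = (pp j / fact j) * (\<Sum>k\<in>{j..l}. ?h k j)"
      by (simp only: sum_distrib_left[symmetric])
  qed
  also have "\<dots> = (\<Sum>j\<le>l. (pp j / fact j) * ((-1)^l * pochhammer (- b - of_nat m) l / fact l
       * pochhammer (- of_nat l) j * pochhammer b j / pochhammer (b + of_nat m - of_nat l + 1) j))"
  proof (rule sum.cong[OF refl])
    fix j assume "j \<in> {..l}"
    then have jl: "j \<le> l" by simp
    show "(pp j / fact j) * (\<Sum>k\<in>{j..l}. ?h k j) = (pp j / fact j) * ((-1)^l * pochhammer (- b - of_nat m) l / fact l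
       * pochhammer (- of_nat l) j * pochhammer b j / pochhammer (b + of_nat m - of_nat l + 1) j)"
      using coefW[OF jl lm] nz jl by simp
  qed
  also have "\<dots> = (-1)^l * pochhammer (- b - of_nat m) l / fact l *
         (\<Sum>j\<le>l. pochhammer (- of_nat l) j * pochhammer b j * pp j
              / (pochhammer (b + of_nat m - of_nat l + 1) j * fact j))"
    unfolding sum_distrib_left by (rule sum.cong[OF refl]) (simp add: divide_inverse ac_simps)
  finally show ?thesis .
qed

lemma qterm:
  fixes a t A B D :: complex
  assumes D: "D = B - a" and km: "k \<le> m" and nzA: "pochhammer A m \<noteq> 0" and nzB: "pochhammer B m \<noteq> 0"
  shows "pochhammer a k * pochhammer t k / (pochhammer A k * pochhammer B k)
     * hyp_term [- of_nat m + of_nat k, t + of_nat k, D] [A + of_nat k, B + of_nat k] (m - k)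
   = (\<Sum>l\<in>{k..m}. of_nat ((m - k) choose (l - k)) * pochhammer a l * pochhammer t l
        * pochhammer (A - t) (m - l) / pochhammer B l) / pochhammer A m"
proof -
  have sA: "pochhammer A m = pochhammer A k * pochhammer (A + of_nat k) (m - k)" by (rule poch_split[OF km])
  have sB: "pochhammer B m = pochhammer B k * pochhammer (B + of_nat k) (m - k)" by (rule poch_split[OF km])
  have nzA1: "pochhammer A k \<noteq> 0" "pochhammer (A + of_nat k) (m - k) \<noteq> 0" using nzA sA by auto
  have nzB1: "pochhammer B k \<noteq> 0" "pochhammer (B + of_nat k) (m - k) \<noteq> 0" using nzB sB by auto
  have mk: "- of_nat m + of_nat k = (- of_nat (m - k) :: complex)" using km by (simp add: of_nat_diff)
  have "hyp_term [- of_nat m + of_nat k, t + of_nat k, D] [A + of_nat k, B + of_nat k] (m - k)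
      = (\<Sum>j\<le>m-k. pochhammer (- of_nat (m-k)) j * pochhammer (t + of_nat k) j
           * pochhammer ((B + of_nat k) - (a + of_nat k)) j
            / (pochhammer (A + of_nat k) j * pochhammer (B + of_nat k) j * fact j))"
    unfolding hyp_term_def mk D by (rule sum.cong) (simp_all add: field_simps)
  also have "\<dots> = (\<Sum>i\<le>m-k. of_nat ((m-k) choose i) * pochhammer (a + of_nat k) i * pochhammer (t + of_nat k) i
       * pochhammer (A + of_nat k - (t + of_nat k)) (m - k - i) / pochhammer (B + of_nat k) i) / pochhammer (A + of_nat k) (m - k)"
    by (rule sheppard[OF nzA1(2) nzB1(2)])
  finally have H: "hyp_term [- of_nat m + of_nat k, t + of_nat k, D] [A + of_nat k, B + of_nat k] (m - k) = \<dots>" .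
  have "pochhammer a k * pochhammer t k / (pochhammer A k * pochhammer B k)
     * hyp_term [- of_nat m + of_nat k, t + of_nat k, D] [A + of_nat k, B + of_nat k] (m - k)
     = (\<Sum>i\<le>m-k. of_nat ((m-k) choose i) * (pochhammer a k * pochhammer (a + of_nat k) i)
         * (pochhammer t k * pochhammer (t + of_nat k) i)
       * pochhammer (A - t) (m - (k + i)) / (pochhammer B k * pochhammer (B + of_nat k) i)) / pochhammer A m"
    unfolding H sA sum_divide_distrib sum_distrib_left
  proof (rule sum.cong[OF refl])
    fix i assume "i \<in> {..m-k}"
    have e: "A + of_nat k - (t + of_nat k) = A - t" "m - k - i = m - (k + i)" by simp_all
    show "pochhammer a k * pochhammer t k / (pochhammer A k * pochhammer B k) *
         (of_nat ((m-k) choose i) * pochhammer (a + of_nat k) i * pochhammer (t + of_nat k) i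
       * pochhammer (A + of_nat k - (t + of_nat k)) (m - k - i) / pochhammer (B + of_nat k) i / pochhammer (A + of_nat k) (m - k))
      = of_nat ((m-k) choose i) * (pochhammer a k * pochhammer (a + of_nat k) i)
         * (pochhammer t k * pochhammer (t + of_nat k) i)
       * pochhammer (A - t) (m - (k + i)) / (pochhammer B k * pochhammer (B + of_nat k) i) / (pochhammer A k * pochhammer (A + of_nat k) (m - k))"
      unfolding e using nzA1 nzB1 by (simp add: divide_inverse ac_simps)
  qed
  also have "\<dots> = (\<Sum>i\<le>m-k. of_nat ((m-k) choose ((k + i) - k)) * pochhammer a (k + i) * pochhammer t (k + i)
       * pochhammer (A - t) (m - (k + i)) / pochhammer B (k + i)) / pochhammer A m"
    unfolding pochhammer_product' by simp
  also have "\<dots> = (\<Sum>l\<in>{k..m}. of_nat ((m - k) choose (l - k)) * pochhammer a l * pochhammer t l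
        * pochhammer (A - t) (m - l) / pochhammer B l) / pochhammer A m"
    using sum_shift_from[OF km, of "\<lambda>l. of_nat ((m - k) choose (l - k)) * pochhammer a l * pochhammer t l
        * pochhammer (A - t) (m - l) / pochhammer B l"] by simp
  finally show ?thesis .
qed

lemma triangle:
  fixes g :: "nat \<Rightarrow> nat \<Rightarrow> complex"
  shows "(\<Sum>k\<le>m. \<Sum>l\<in>{k..m}. g k l) = (\<Sum>l\<le>m. \<Sum>k\<le>l. g k l)"
proof -
  have "(\<Sum>k\<le>m. \<Sum>l\<in>{k..m}. g k l) = (\<Sum>k\<le>m. \<Sum>l\<le>m. if k \<le> l then g k l else 0)"
  proof (rule sum.cong[OF refl])
    fix k assume "k \<in> {..m}"
    show "(\<Sum>l\<in>{k..m}. g k l) = (\<Sum>l\<le>m. if k \<le> l then g k l else 0)"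
      by (rule sum.mono_neutral_cong_left) auto
  qed
  also have "\<dots> = (\<Sum>l\<le>m. \<Sum>k\<le>m. if k \<le> l then g k l else 0)" by (rule sum.swap)
  also have "\<dots> = (\<Sum>l\<le>m. \<Sum>k\<le>l. g k l)"
  proof (rule sum.cong[OF refl])
    fix l assume "l \<in> {..m}"
    then show "(\<Sum>k\<le>m. if k \<le> l then g k l else 0) = (\<Sum>k\<le>l. g k l)"
      by (intro sum.mono_neutral_cong_right) auto
  qed
  finally show ?thesis .
qed

lemma assembly:
  fixes a b t A B :: complex and pp Cc G :: "nat \<Rightarrow> complex"
  assumes Cc: "\<And>k. Cc k = (-1)^k / fact k * (\<Sum>j\<le>k. pochhammer (- of_nat k) j * pp j / fact j)"
    and G: "\<And>l. G l = (\<Sum>j\<le>l. pochhammer (- of_nat l) j * pochhammer b j * pp j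
              / (pochhammer (b + of_nat m - of_nat l + 1) j * fact j))"
    and nzA: "pochhammer A m \<noteq> 0" and nzB: "pochhammer B m \<noteq> 0"
    and bwd: "\<forall>k\<le>m. \<forall>j\<le>k. pochhammer (b + of_nat m - of_nat k + 1) j \<noteq> 0"
  shows "(\<Sum>k\<le>m. (-1)^k * Cc k * pochhammer a k * pochhammer b k * pochhammer t k
            / (pochhammer A k * pochhammer B k)
            * hyp_term [- of_nat m + of_nat k, t + of_nat k, B - a] [A + of_nat k, B + of_nat k] (m - k))
       = (\<Sum>k\<le>m. (-1)^k * pochhammer a k * pochhammer (- b - of_nat m) k * pochhammer t k
            * pochhammer (A - t) (m - k) / (pochhammer A m * pochhammer B k * fact k) * G k)"
proof -
  let ?F = "\<lambda>l. pochhammer a l * pochhammer t l * pochhammer (A - t) (m - l) / pochhammer B l"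
  have "(\<Sum>k\<le>m. (-1)^k * Cc k * pochhammer a k * pochhammer b k * pochhammer t k
            / (pochhammer A k * pochhammer B k)
            * hyp_term [- of_nat m + of_nat k, t + of_nat k, B - a] [A + of_nat k, B + of_nat k] (m - k))
      = (\<Sum>k\<le>m. \<Sum>l\<in>{k..m}. (?F l / pochhammer A m) * ((-1)^k * Cc k * pochhammer b k * of_nat ((m - k) choose (l - k))))"
  proof (rule sum.cong[OF refl])
    fix k assume "k \<in> {..m}"
    then have km: "k \<le> m" by simp
    have "(-1)^k * Cc k * pochhammer a k * pochhammer b k * pochhammer t k
            / (pochhammer A k * pochhammer B k)
            * hyp_term [- of_nat m + of_nat k, t + of_nat k, B - a] [A + of_nat k, B + of_nat k] (m - k)
        = ((-1)^k * Cc k * pochhammer b k) * (pochhammer a k * pochhammer t k / (pochhammer A k * pochhammer B k)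
            * hyp_term [- of_nat m + of_nat k, t + of_nat k, B - a] [A + of_nat k, B + of_nat k] (m - k))"
      by (simp add: divide_inverse ac_simps)
    also have "\<dots> = ((-1)^k * Cc k * pochhammer b k) * ((\<Sum>l\<in>{k..m}. of_nat ((m - k) choose (l - k)) * pochhammer a l * pochhammer t l
        * pochhammer (A - t) (m - l) / pochhammer B l) / pochhammer A m)"
      unfolding qterm[OF refl km nzA nzB] ..
    also have "\<dots> = (\<Sum>l\<in>{k..m}. (?F l / pochhammer A m) * ((-1)^k * Cc k * pochhammer b k * of_nat ((m - k) choose (l - k))))"
      unfolding sum_divide_distrib sum_distrib_left
      by (rule sum.cong[OF refl]) (simp add: divide_inverse ac_simps)
    finally show "(-1)^k * Cc k * pochhammer a k * pochhammer b k * pochhammer t k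
            / (pochhammer A k * pochhammer B k)
            * hyp_term [- of_nat m + of_nat k, t + of_nat k, B - a] [A + of_nat k, B + of_nat k] (m - k)
       = (\<Sum>l\<in>{k..m}. (?F l / pochhammer A m) * ((-1)^k * Cc k * pochhammer b k * of_nat ((m - k) choose (l - k))))" .
  qed
  also have "\<dots> = (\<Sum>l\<le>m. \<Sum>k\<le>l. (?F l / pochhammer A m) * ((-1)^k * Cc k * pochhammer b k * of_nat ((m - k) choose (l - k))))"
    by (rule triangle)
  also have "\<dots> = (\<Sum>l\<le>m. (?F l / pochhammer A m) * ((-1)^l * pochhammer (- b - of_nat m) l / fact l * G l))"
  proof (rule sum.cong[OF refl])
    fix l assume "l \<in> {..m}"
    then have lm: "l \<le> m" by simp
    have nz: "\<forall>j\<le>l. pochhammer (b + of_nat m - of_nat l + 1) j \<noteq> 0" using bwd lm by blast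
    have PL: "(\<Sum>k\<le>l. (-1)^k * Cc k * pochhammer b k * of_nat ((m - k) choose (l - k)))
       = (-1)^l * pochhammer (- b - of_nat m) l / fact l * G l"
      unfolding Cc G using perl[OF lm nz, of pp] by (simp add: mult.assoc)
    show "(\<Sum>k\<le>l. (?F l / pochhammer A m) * ((-1)^k * Cc k * pochhammer b k * of_nat ((m - k) choose (l - k))))
       = (?F l / pochhammer A m) * ((-1)^l * pochhammer (- b - of_nat m) l / fact l * G l)"
      by (subst sum_distrib_left[symmetric]) (simp only: PL)
  qed
  also have "\<dots> = (\<Sum>k\<le>m. (-1)^k * pochhammer a k * pochhammer (- b - of_nat m) k * pochhammer t k
            * pochhammer (A - t) (m - k) / (pochhammer A m * pochhammer B k * fact k) * G k)"
    by (rule sum.cong[OF refl]) (simp add: divide_inverse ac_simps)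
  finally show ?thesis .
qed

theorem corollary2:
  fixes r :: nat and mm :: "nat \<Rightarrow> nat" and f :: "nat \<Rightarrow> complex"
    and a b c :: complex
  defines "m \<equiv> (\<Sum>i<r. mm i)"
  assumes "r \<ge> 1"
    and "pochhammer (c - a - of_nat m) m \<noteq> 0"
    and "pochhammer (c - b - of_nat m) m \<noteq> 0"
    and "pochhammer (1 + a + b - c) m \<noteq> 0"
    and f_wd: "\<forall>i<r. \<forall>j\<le>m. pochhammer (f i) j \<noteq> 0"
    and b_wd: "\<forall>k\<le>m. \<forall>j\<le>k. pochhammer (b + of_nat m - of_nat k + 1) j \<noteq> 0"
  shows "\<forall>t. Qhat r f mm a b c t = Phat r f mm a b c t"
proof
  fix t
  define pp where "pp j = prod_list (map (\<lambda>x. pochhammer x j) (map (\<lambda>i. f i + of_nat (mm i)) [0..<r]))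
      / prod_list (map (\<lambda>x. pochhammer x j) (map f [0..<r]))" for j
  have Cc: "Ccoef r f mm k = (-1)^k / fact k * (\<Sum>j\<le>k. pochhammer (- of_nat k) j * pp j / fact j)" for k
    unfolding Ccoef_def hyp_term_def pp_def by simp
  have G: "hyp_term ((- of_nat l) # b # map (\<lambda>i. f i + of_nat (mm i)) [0..<r])
                       ((b + of_nat m - of_nat l + 1) # map f [0..<r]) l
     = (\<Sum>j\<le>l. pochhammer (- of_nat l) j * pochhammer b j * pp j
              / (pochhammer (b + of_nat m - of_nat l + 1) j * fact j))" for l
    unfolding hyp_term_def pp_def by (rule sum.cong[OF refl]) (simp add: divide_inverse ac_simps)
  have D: "c - a - b - of_nat m = (c - b - of_nat m) - a" by simp
  show "Qhat r f mm a b c t = Phat r f mm a b c t"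
    unfolding Qhat_def Phat_def Let_def m_def[symmetric] D
    by (rule assembly[OF Cc G assms(3,4) b_wd])
qed

end
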